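(* EpochPOP, as described in the context, is free from use-after-free errors: no node freed by a reclaiming thread is subsequently accessed by any thread.
   Context: Setting: an asynchronous shared-memory system with a fixed set of threads operating on a linked concurrent data structure; each unlinked node is retired by exactly one thread. EpochPOP: there is a shared monotonically increasing global epoch (incremented periodically at operation starts) and a shared array reservedEpoch with one slot per thread. At the start of each operation a thread writes the current global epoch into its reservedEpoch slot; at the end it writes a maximal value MAX and clears its local reservations. During an operation, nodes are accessed only through a read(ptrAddr, slot) call that repeatedly loads the pointer at ptrAddr, stores it in a private local reservation slot (no fence, not published), and re-loads until the loads agree (hazard-pointer style usage, so that a returned node was not retired at the time of validation). Each thread also has a row of a shared reservation array and a shared counter publishCounter. On retire, a thread records the current global epoch as the node's retire epoch and appends it to its retire list; periodically it frees every node in its retire list whose retire epoch is smaller than the minimum value in reservedEpoch; if afterwards the retire list is still at least a fixed multiple of the threshold, it records all publishCounters, sends a POSIX signal to every other thread (whose handler copies its local reservations into its shared slots and increments its publishCounter), waits until all other publishCounters have increased, and frees every node of its retire list not among the published reservations. Assumption: after being signalled, a thread publishes its reservations within bounded time. *)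

theory Defs
  imports Main "HOL-Library.Extended_Nat"
begin

text \<open>An interleaving (sequentially consistent) model of EpochPOP.  The reserved-epoch value MAX is represented
  by infinity in enat.\<close>

datatype nstatus = Unalloc | Live | Retired | Freed

datatype pcv =
    Idle
  | Starting nat      (* operation started, global epoch e has been read *)
  | InOp
  | CheckPop          (* after the epoch-based freeing pass *)
  | Waiting           (* POP: signals sent, waiting for publishCounters *)

record ('t, 'n) st =
  gEpoch  :: nat
  resv    :: "'t \<Rightarrow> enat"
  status  :: "'n \<Rightarrow> nstatus"
  pc      :: "'t \<Rightarrow> pcv"
  lres    :: "'t \<Rightarrow> nat \<Rightarrow> 'n option"      (* private local reservation slots *)
  valid   :: "'t \<Rightarrow> nat \<Rightarrow> bool"          (* slot holds a node returned by read *)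
  rlist   :: "'t \<Rightarrow> ('n \<times> nat) list"     (* retire list with retire epochs *)
  pubRes  :: "'t \<Rightarrow> nat \<Rightarrow> 'n option"      (* shared reservation rows *)
  pubCnt  :: "'t \<Rightarrow> nat"
  pending :: "'t \<Rightarrow> bool"
  snap    :: "'t \<Rightarrow> 't \<Rightarrow> nat"           (* recorded publishCounters of a reclaimer *)

definition epop_init :: "('t, 'n) st" where
  "epop_init = \<lparr> gEpoch = 0, resv = (\<lambda>_. \<infinity>), status = (\<lambda>_. Unalloc),
     pc = (\<lambda>_. Idle), lres = (\<lambda>_ _. None), valid = (\<lambda>_ _. False),
     rlist = (\<lambda>_. []), pubRes = (\<lambda>_ _. None), pubCnt = (\<lambda>_. 0),
     pending = (\<lambda>_. False), snap = (\<lambda>_ _. 0) \<rparr>"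

text \<open>One atomic step of some thread.  B is the POP trigger bound
  (the fixed multiple of the threshold).\<close>

inductive epop_step :: "nat \<Rightarrow> ('t, 'n) st \<Rightarrow> ('t, 'n) st \<Rightarrow> bool" for B :: nat where
  begin_op:
    "\<lbrakk> pc s t = Idle; g' = (if inc then Suc (gEpoch s) else gEpoch s) \<rbrakk> \<Longrightarrow>
     epop_step B s (s\<lparr> gEpoch := g', pc := (pc s)(t := Starting g') \<rparr>)"
| reserve:
    "pc s t = Starting e \<Longrightarrow>
     epop_step B s (s\<lparr> resv := (resv s)(t := enat e), pc := (pc s)(t := InOp) \<rparr>)"
| read_store:   (* a load of the pointer may yield anything; it is stored, unvalidated *)
    "pc s t = InOp \<Longrightarrow>
     epop_step B s (s\<lparr> lres := (lres s)(t := (lres s t)(k := v)),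
                        valid := (valid s)(t := (valid s t)(k := False)) \<rparr>)"
| read_validate: (* the re-load agrees: by HP-style usage the node is not retired *)
    "\<lbrakk> pc s t = InOp; lres s t k = Some n; status s n = Live \<rbrakk> \<Longrightarrow>
     epop_step B s (s\<lparr> valid := (valid s)(t := (valid s t)(k := True)) \<rparr>)"
| alloc:
    "\<lbrakk> pc s t = InOp; status s n = Unalloc \<rbrakk> \<Longrightarrow>
     epop_step B s (s\<lparr> status := (status s)(n := Live) \<rparr>)"
| retire:
    "\<lbrakk> pc s t = InOp; status s n = Live \<rbrakk> \<Longrightarrow>
     epop_step B s (s\<lparr> status := (status s)(n := Retired),
                        rlist := (rlist s)(t := rlist s t @ [(n, gEpoch s)]) \<rparr>)"
| epoch_free:
    "\<lbrakk> pc s t = InOp; m = (INF u. resv s u) \<rbrakk> \<Longrightarrow>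
     epop_step B s (s\<lparr> status := (\<lambda>x. if \<exists>e. (x, e) \<in> set (rlist s t) \<and> enat e < m
                                        then Freed else status s x),
                        rlist := (rlist s)(t := filter (\<lambda>(x, e). \<not> enat e < m) (rlist s t)),
                        pc := (pc s)(t := CheckPop) \<rparr>)"
| pop_skip:
    "\<lbrakk> pc s t = CheckPop; length (rlist s t) < B \<rbrakk> \<Longrightarrow>
     epop_step B s (s\<lparr> pc := (pc s)(t := InOp) \<rparr>)"
| pop_start:
    "\<lbrakk> pc s t = CheckPop; B \<le> length (rlist s t) \<rbrakk> \<Longrightarrow>
     epop_step B s (s\<lparr> snap := (snap s)(t := pubCnt s),
                        pubRes := (pubRes s)(t := lres s t),
                        pending := (\<lambda>u. if u = t then pending s u else True),
                        pc := (pc s)(t := Waiting) \<rparr>)"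
| handle:      (* signal handler of thread u *)
    "pending s u \<Longrightarrow>
     epop_step B s (s\<lparr> pubRes := (pubRes s)(u := lres s u),
                        pubCnt := (pubCnt s)(u := Suc (pubCnt s u)),
                        pending := (pending s)(u := False) \<rparr>)"
| pop_free:
    "\<lbrakk> pc s t = Waiting; \<forall>u. u \<noteq> t \<longrightarrow> snap s t u < pubCnt s u;
       P = {x. \<exists>u k. pubRes s u k = Some x} \<rbrakk> \<Longrightarrow>
     epop_step B s (s\<lparr> status := (\<lambda>x. if x \<in> fst ` set (rlist s t) \<and> x \<notin> P
                                        then Freed else status s x),
                        rlist := (rlist s)(t := filter (\<lambda>(x, e). x \<in> P) (rlist s t)),
                        pc := (pc s)(t := InOp) \<rparr>)"
| end_op:
    "pc s t = InOp \<Longrightarrow>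
     epop_step B s (s\<lparr> resv := (resv s)(t := \<infinity>),
                        lres := (lres s)(t := (\<lambda>_. None)),
                        valid := (valid s)(t := (\<lambda>_. False)),
                        pc := (pc s)(t := Idle) \<rparr>)"

inductive epop_reach :: "nat \<Rightarrow> ('t, 'n) st \<Rightarrow> bool" for B :: nat where
  init: "epop_reach B epop_init"
| step: "\<lbrakk> epop_reach B s; epop_step B s s' \<rbrakk> \<Longrightarrow> epop_reach B s'"

definition accesses :: "('t, 'n) st \<Rightarrow> 't \<Rightarrow> 'n \<Rightarrow> bool" where
  "accesses s t n \<longleftrightarrow> pc s t = InOp \<and> (\<exists>k. lres s t k = Some n \<and> valid s t k)"

end

theory Submission
  imports Defs
begin

definition act :: "pcv \<Rightarrow> bool" where
  "act p \<longleftrightarrow> p = InOp \<or> p = CheckPop \<or> p = Waiting"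

definition invA :: "('t, 'n) st \<Rightarrow> bool" where
  "invA s \<longleftrightarrow> (\<forall>u k. valid s u k \<longrightarrow> act (pc s u))
     \<and> (\<forall>u. act (pc s u) \<longrightarrow> (\<exists>e. resv s u = enat e \<and> e \<le> gEpoch s))
     \<and> (\<forall>u e. pc s u = Starting e \<longrightarrow> e \<le> gEpoch s)"

definition invB :: "('t, 'n) st \<Rightarrow> bool" where
  "invB s \<longleftrightarrow> (\<forall>t n e. (n,e) \<in> set (rlist s t) \<longrightarrow> status s n = Retired)
     \<and> (\<forall>t t' n e e'. (n,e) \<in> set (rlist s t) \<longrightarrow> (n,e') \<in> set (rlist s t') \<longrightarrow> t = t' \<and> e = e')"

definition invC :: "('t, 'n) st \<Rightarrow> bool" where
  "invC s \<longleftrightarrow> (\<forall>u k n. valid s u k \<longrightarrow> lres s u k = Some n \<longrightarrow>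
     (status s n = Live \<or> status s n = Retired) \<and>
     (\<forall>t e. (n,e) \<in> set (rlist s t) \<longrightarrow> resv s u \<le> enat e \<and>
        (pc s t = Waiting \<longrightarrow> (u = t \<longrightarrow> pubRes s u k = Some n) \<and>
            (u \<noteq> t \<longrightarrow> snap s t u < pubCnt s u \<longrightarrow> pubRes s u k = Some n))))"

lemma invA_step: "epop_step B s s' \<Longrightarrow> invA s \<Longrightarrow> invA s'"
  by (induction rule: epop_step.induct) (auto simp: invA_def act_def split: if_splits intro: le_SucI)

lemma invB_step: "epop_step B s s' \<Longrightarrow> invB s \<Longrightarrow> invB s'"
proof (induction rule: epop_step.induct)
  case (retire s t n)
  then show ?case unfolding invB_def by (auto split: if_splits; metis nstatus.distinct)
next
  case (epoch_free s t m)
  then show ?case unfolding invB_def by (auto split: if_splits; blast)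
next
  case (pop_free s t P)
  then show ?case unfolding invB_def by (auto split: if_splits; force)
next
  case (alloc s t n)
  then show ?case unfolding invB_def by (auto; metis nstatus.distinct)
qed (auto simp: invB_def split: if_splits)

definition Cold where
  "Cold s u k n \<longleftrightarrow> (status s n = Live \<or> status s n = Retired) \<and>
     (\<forall>t e. (n,e) \<in> set (rlist s t) \<longrightarrow> resv s u \<le> enat e \<and>
        (pc s t = Waiting \<longrightarrow> (u = t \<longrightarrow> pubRes s u k = Some n) \<and>
            (u \<noteq> t \<longrightarrow> snap s t u < pubCnt s u \<longrightarrow> pubRes s u k = Some n)))"

lemma invC_alt: "invC s \<longleftrightarrow> (\<forall>u k n. valid s u k \<longrightarrow> lres s u k = Some n \<longrightarrow> Cold s u k n)"
  unfolding invC_def Cold_def by blast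

lemma invC_step: "epop_step B s s' \<Longrightarrow> invA s \<Longrightarrow> invB s \<Longrightarrow> invC s \<Longrightarrow> invC s'"
proof (induction rule: epop_step.induct)
  case (retire s t n0)
  show ?case unfolding invC_alt
    apply (intro allI impI)
    subgoal premises p for u k n
    proof -
    have v: "valid s u k" and l: "lres s u k = Some n" using p by auto
    have old: "Cold s u k n"
      using retire.prems(3) v l unfolding invC_alt by blast
    obtain e0 where e0: "resv s u = enat e0" "e0 \<le> gEpoch s"
      using retire.prems(1) v unfolding invA_def act_def by blast
    show ?thesis
      using old e0 retire.hyps unfolding Cold_def by auto
  qed
  done
next
  case (epoch_free s t m)
  show ?case unfolding invC_alt
    apply (intro allI impI)
    subgoal premises p for u k n
    proof -
    have v: "valid s u k" and l: "lres s u k = Some n" using p by auto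
    have old: "Cold s u k n"
      using epoch_free.prems(3) v l unfolding invC_alt by blast
    have mu: "m \<le> resv s u" using epoch_free.hyps(2) by (simp add: INF_lower)
    have nf: "\<not> (\<exists>e. (n, e) \<in> set (rlist s t) \<and> enat e < m)"
      using old mu unfolding Cold_def by (meson leD order_trans)
    show ?thesis
      using old nf epoch_free.hyps unfolding Cold_def by auto
  qed
  done
next
  case (pop_free s t P)
  show ?case unfolding invC_alt
    apply (intro allI impI)
    subgoal premises p for u k n
    proof -
    have v: "valid s u k" and l: "lres s u k = Some n" using p by auto
    have old: "Cold s u k n"
      using pop_free.prems(3) v l unfolding invC_alt by blast
    have nf: "n \<in> fst ` set (rlist s t) \<Longrightarrow> n \<in> P"
    proof -
      assume "n \<in> fst ` set (rlist s t)"
      then obtain e where "(n, e) \<in> set (rlist s t)" by force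
      then have "pubRes s u k = Some n" using old pop_free.hyps unfolding Cold_def by (cases "u = t") auto
      then show "n \<in> P" using pop_free.hyps by blast
    qed
    show ?thesis
      using old nf pop_free.hyps unfolding Cold_def by auto
  qed
  done
next
  case (read_validate s t k n0)
  have nr: "\<forall>ta e. (n0, e) \<notin> set (rlist s ta)"
    using read_validate.prems(2) read_validate.hyps(3) unfolding invB_def by fastforce
  show ?case using nr read_validate.hyps read_validate.prems(3) unfolding invC_def by auto
qed (auto simp: invA_def invB_def invC_def act_def split: if_splits)

lemma inv_reach: "epop_reach B s \<Longrightarrow> invA s \<and> invB s \<and> invC s"
proof (induction rule: epop_reach.induct)
  case init
  then show ?case by (simp add: epop_init_def invA_def invB_def invC_def act_def)
next
  case (step s s')
  then show ?case using invA_step invB_step invC_step by blast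
qed

theorem mainTheorem10:
  fixes B :: nat and s :: "('t::finite, 'n) st" and t :: 't and n :: 'n
  assumes "epop_reach B s"
      and "accesses s t n"
  shows "status s n \<noteq> Freed"
proof -
  have "invC s" using inv_reach[OF assms(1)] by blast
  then show ?thesis using assms(2) unfolding invC_def accesses_def by force
qed

end
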